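(* Let $M$ be a combinatorial $3$-manifold with vertex set $V=V_1\dot\cup V_2$, and let $S_{(V_1,V_2)}$ be a connected slicing of $M$ of genus $g$ with $q$ quadrilaterals. Suppose that for some $i\in\{1,2\}$ the induced subcomplex $\operatorname{span}(V_i)$ has dimension $1$, and let $n:=|V_i|$. Then \[ q\ \ge\ 3(n+g-1). \] In particular, this applies to every slicing all of whose facets are quadrilaterals.
   Context: A combinatorial $3$-manifold is a finite pure $3$-dimensional simplicial complex in which the link of every vertex is a combinatorial $2$-sphere. For a set $W$ of vertices, $\operatorname{span}(W)$ is the induced subcomplex of $M$ on $W$ (all simplices of $M$ with all vertices in $W$). A function $f:M\to\mathbb{R}$ is regular simplexwise linear (rsl) if it is linear on every simplex and takes pairwise distinct values on the vertices. Given a partition $V=V_1\dot\cup V_2$ of the vertex set into nonempty sets, choose an rsl-function $f$ with $f(v)<f(w)$ for all $v\in V_1$, $w\in V_2$ and $x_0$ strictly between $\max f(V_1)$ and $\min f(V_2)$; the slicing $S_{(V_1,V_2)}$ is the polyhedral surface $f^{-1}(x_0)$, whose facets are the triangles and quadrilaterals obtained by intersecting $f^{-1}(x_0)$ with the tetrahedra of $M$ meeting both $V_1$ and $V_2$ (a quadrilateral arises from a tetrahedron with exactly two vertices in each part). *)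

theory Defs
  imports Main
begin

definition simplicial_complex :: "'a set set \<Rightarrow> bool" where
  "simplicial_complex K \<longleftrightarrow> finite K \<and> (\<forall>\<sigma>\<in>K. finite \<sigma> \<and> \<sigma> \<noteq> {})
     \<and> (\<forall>\<sigma>\<in>K. \<forall>\<tau>. \<tau> \<subseteq> \<sigma> \<and> \<tau> \<noteq> {} \<longrightarrow> \<tau> \<in> K)"

definition verts :: "'a set set \<Rightarrow> 'a set" where
  "verts K = \<Union>K"

definition faces :: "'a set set \<Rightarrow> nat \<Rightarrow> 'a set set" where
  "faces K k = {\<sigma>\<in>K. card \<sigma> = k + 1}"

definition complex_dim :: "'a set set \<Rightarrow> nat \<Rightarrow> bool" where
  "complex_dim K d \<longleftrightarrow> (\<exists>\<sigma>\<in>K. card \<sigma> = d + 1) \<and> (\<forall>\<sigma>\<in>K. card \<sigma> \<le> d + 1)"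

definition pure_dim :: "'a set set \<Rightarrow> nat \<Rightarrow> bool" where
  "pure_dim K d \<longleftrightarrow> complex_dim K d \<and> (\<forall>\<sigma>\<in>K. \<exists>\<tau>\<in>K. \<sigma> \<subseteq> \<tau> \<and> card \<tau> = d + 1)"

definition link :: "'a set set \<Rightarrow> 'a \<Rightarrow> 'a set set" where
  "link K v = {\<sigma>. \<sigma> \<noteq> {} \<and> v \<notin> \<sigma> \<and> insert v \<sigma> \<in> K}"

definition span :: "'a set set \<Rightarrow> 'a set \<Rightarrow> 'a set set" where
  "span K W = {\<sigma>\<in>K. \<sigma> \<subseteq> W}"

text \<open>connectedness (of the 1-skeleton, equivalently of the polyhedron)\<close>
definition connected_cx :: "'a set set \<Rightarrow> bool" where
  "connected_cx K \<longleftrightarrow> verts K \<noteq> {} \<and>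
     (\<forall>u\<in>verts K. \<forall>w\<in>verts K. (u, w) \<in> {(x, y). {x, y} \<in> K}\<^sup>*)"

definition euler_char :: "'a set set \<Rightarrow> int" where
  "euler_char K = int (card (faces K 0)) - int (card (faces K 1)) + int (card (faces K 2))"

definition comb_1_sphere :: "'a set set \<Rightarrow> bool" where
  "comb_1_sphere K \<longleftrightarrow> simplicial_complex K \<and> pure_dim K 1 \<and> connected_cx K \<and>
     (\<forall>v\<in>verts K. card {e\<in>faces K 1. v \<in> e} = 2)"

definition comb_2_sphere :: "'a set set \<Rightarrow> bool" where
  "comb_2_sphere K \<longleftrightarrow> simplicial_complex K \<and> pure_dim K 2 \<and> connected_cx K \<and>
     (\<forall>e\<in>faces K 1. card {t\<in>faces K 2. e \<subseteq> t} = 2) \<and>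
     (\<forall>v\<in>verts K. comb_1_sphere (link K v)) \<and> euler_char K = 2"

definition comb_3_manifold :: "'a set set \<Rightarrow> bool" where
  "comb_3_manifold M \<longleftrightarrow> simplicial_complex M \<and> pure_dim M 3 \<and>
     (\<forall>v\<in>verts M. comb_2_sphere (link M v))"

text \<open>Combinatorial description of the slicing S_(V1,V2): its vertices are the edges of M
meeting both V1 and V2, its edges the triangles of M meeting both, its facets the tetrahedra
meeting both; a facet is a quadrilateral iff the tetrahedron has exactly two vertices in
each part.\<close>

definition crosses :: "'a set \<Rightarrow> 'a set \<Rightarrow> 'a set \<Rightarrow> bool" where
  "crosses V1 V2 \<sigma> \<longleftrightarrow> \<sigma> \<inter> V1 \<noteq> {} \<and> \<sigma> \<inter> V2 \<noteq> {}"

definition slice_verts :: "'a set set \<Rightarrow> 'a set \<Rightarrow> 'a set \<Rightarrow> 'a set set" where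
  "slice_verts M V1 V2 = {\<sigma>\<in>faces M 1. crosses V1 V2 \<sigma>}"

definition slice_edges :: "'a set set \<Rightarrow> 'a set \<Rightarrow> 'a set \<Rightarrow> 'a set set" where
  "slice_edges M V1 V2 = {\<sigma>\<in>faces M 2. crosses V1 V2 \<sigma>}"

definition slice_facets :: "'a set set \<Rightarrow> 'a set \<Rightarrow> 'a set \<Rightarrow> 'a set set" where
  "slice_facets M V1 V2 = {\<sigma>\<in>faces M 3. crosses V1 V2 \<sigma>}"

definition slice_quads :: "'a set set \<Rightarrow> 'a set \<Rightarrow> 'a set \<Rightarrow> 'a set set" where
  "slice_quads M V1 V2 = {\<sigma>\<in>faces M 3. card (\<sigma> \<inter> V1) = 2 \<and> card (\<sigma> \<inter> V2) = 2}"

definition slice_euler :: "'a set set \<Rightarrow> 'a set \<Rightarrow> 'a set \<Rightarrow> int" where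
  "slice_euler M V1 V2 = int (card (slice_verts M V1 V2)) - int (card (slice_edges M V1 V2))
      + int (card (slice_facets M V1 V2))"

definition slice_connected :: "'a set set \<Rightarrow> 'a set \<Rightarrow> 'a set \<Rightarrow> bool" where
  "slice_connected M V1 V2 \<longleftrightarrow> slice_verts M V1 V2 \<noteq> {} \<and>
     (\<forall>e\<in>slice_verts M V1 V2. \<forall>e'\<in>slice_verts M V1 V2.
        (e, e') \<in> {(x, y). \<exists>t\<in>slice_edges M V1 V2. x \<subseteq> t \<and> y \<subseteq> t}\<^sup>*)"

definition slice_genus :: "'a set set \<Rightarrow> 'a set \<Rightarrow> 'a set \<Rightarrow> int \<Rightarrow> bool" where
  "slice_genus M V1 V2 g \<longleftrightarrow> slice_euler M V1 V2 = 2 - 2 * g"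

end

theory Submission
  imports Defs
begin

lemma sc_fin: "simplicial_complex M \<Longrightarrow> finite M"
  by (simp add: simplicial_complex_def)
lemma sc_el: "simplicial_complex M \<Longrightarrow> \<sigma> \<in> M \<Longrightarrow> finite \<sigma> \<and> \<sigma> \<noteq> {}"
  by (simp add: simplicial_complex_def)
lemma sc_sub: "simplicial_complex M \<Longrightarrow> \<sigma> \<in> M \<Longrightarrow> \<tau> \<subseteq> \<sigma> \<Longrightarrow> \<tau> \<noteq> {} \<Longrightarrow> \<tau> \<in> M"
  unfolding simplicial_complex_def by blast
lemma sc_verts_fin: "simplicial_complex M \<Longrightarrow> finite (verts M)"
  unfolding verts_def simplicial_complex_def by auto

lemma c3_sc: "comb_3_manifold M \<Longrightarrow> simplicial_complex M"
  by (simp add: comb_3_manifold_def)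
lemma c3_card: "comb_3_manifold M \<Longrightarrow> \<sigma> \<in> M \<Longrightarrow> card \<sigma> \<le> 4"
  unfolding comb_3_manifold_def pure_dim_def complex_dim_def by auto

lemma edge_link:
  assumes M: "comb_3_manifold M" and e: "e \<in> M" "card e = 2"
  shows "card {\<sigma>\<in>M. card \<sigma> = 3 \<and> e \<subseteq> \<sigma>} = card {\<sigma>\<in>M. card \<sigma> = 4 \<and> e \<subseteq> \<sigma>}
     \<and> card {\<sigma>\<in>M. card \<sigma> = 4 \<and> e \<subseteq> \<sigma>} \<ge> 3"
proof -
  have sc: "simplicial_complex M" using M c3_sc by blast
  obtain v w where vw: "e = {v, w}" "v \<noteq> w" using e(2) card_2_iff by metis
  have vM: "v \<in> verts M" using e vw unfolding verts_def by auto
  define L where "L = link M v"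
  have L2: "comb_2_sphere L" using M vM unfolding comb_3_manifold_def L_def by auto
  have wL: "w \<in> verts L" unfolding verts_def L_def link_def using e vw
    by (auto intro!: exI[of _ "{w}"] simp: insert_commute)
  define K where "K = link L w"
  have K1: "comb_1_sphere K" using L2 wL unfolding comb_2_sphere_def K_def by auto
  have Kc: "\<tau> \<in> K \<longleftrightarrow> \<tau> \<noteq> {} \<and> \<tau> \<inter> e = {} \<and> \<tau> \<union> e \<in> M" for \<tau>
    unfolding K_def L_def link_def using vw by (auto simp: insert_commute)
  have scK: "simplicial_complex K" using K1 comb_1_sphere_def by blast
  have finK: "finite K" using scK sc_fin by blast
  have finvK: "finite (verts K)" using scK sc_verts_fin by blast
  have finM: "finite M" using sc sc_fin by blast
  have fine: "finite e" using e(2) card.infinite by fastforce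
  define T3 where "T3 = {\<sigma>\<in>M. card \<sigma> = 3 \<and> e \<subseteq> \<sigma>}"
  define T4 where "T4 = {\<sigma>\<in>M. card \<sigma> = 4 \<and> e \<subseteq> \<sigma>}"
  have vK: "u \<in> verts K \<longleftrightarrow> u \<notin> e \<and> insert u e \<in> M" for u
  proof
    assume "u \<in> verts K"
    then obtain \<tau> where "\<tau> \<in> K" "u \<in> \<tau>" unfolding verts_def by auto
    then have "\<tau> \<inter> e = {}" "\<tau> \<union> e \<in> M" using Kc by auto
    moreover have "insert u e \<subseteq> \<tau> \<union> e" using \<open>u \<in> \<tau>\<close> by auto
    ultimately show "u \<notin> e \<and> insert u e \<in> M" using sc_sub[OF sc] \<open>u \<in> \<tau>\<close> by blast
  next
    assume "u \<notin> e \<and> insert u e \<in> M"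
    then have "{u} \<in> K" using Kc by auto
    then show "u \<in> verts K" unfolding verts_def by auto
  qed
  have c3: "card (verts K) = card T3"
  proof -
    have "bij_betw (\<lambda>u. insert u e) (verts K) T3"
    proof (rule bij_betw_byWitness[where f'="\<lambda>\<sigma>. the_elem (\<sigma> - e)"])
      show "\<forall>a\<in>verts K. the_elem (insert a e - e) = a" using vK by (simp add: insert_Diff_if)
      show "\<forall>a'\<in>T3. insert (the_elem (a' - e)) e = a'"
      proof
        fix \<sigma> assume "\<sigma> \<in> T3"
        then have "card (\<sigma> - e) = 1" "e \<subseteq> \<sigma>" unfolding T3_def using e(2) fine
          by (auto simp: card_Diff_subset)
        then obtain x where "\<sigma> - e = {x}" using card_1_singletonE by blast
        then show "insert (the_elem (\<sigma> - e)) e = \<sigma>" using \<open>e \<subseteq> \<sigma>\<close> by auto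
      qed
      show "(\<lambda>u. insert u e) ` verts K \<subseteq> T3" using vK e(2) fine unfolding T3_def by auto
      show "(\<lambda>\<sigma>. the_elem (\<sigma> - e)) ` T3 \<subseteq> verts K"
      proof
        fix y assume "y \<in> (\<lambda>\<sigma>. the_elem (\<sigma> - e)) ` T3"
        then obtain \<sigma> where s: "\<sigma> \<in> T3" "y = the_elem (\<sigma> - e)" by auto
        then have "card (\<sigma> - e) = 1" "e \<subseteq> \<sigma>" unfolding T3_def using e(2) fine
          by (auto simp: card_Diff_subset)
        then obtain x where "\<sigma> - e = {x}" using card_1_singletonE by blast
        then show "y \<in> verts K" using s vK \<open>e \<subseteq> \<sigma>\<close> unfolding T3_def
          by (metis Diff_iff Un_Diff_cancel2 insertI1 insert_is_Un mem_Collect_eq sup_commute the_elem_eq sup.absorb_iff1)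
      qed
    qed
    then show ?thesis by (rule bij_betw_same_card)
  qed
  have c4: "card (faces K 1) = card T4"
  proof -
    have "bij_betw (\<lambda>\<tau>. \<tau> \<union> e) (faces K 1) T4"
    proof (rule bij_betw_byWitness[where f'="\<lambda>\<sigma>. \<sigma> - e"])
      show "\<forall>a\<in>faces K 1. a \<union> e - e = a" using Kc unfolding faces_def by auto
      show "\<forall>a'\<in>T4. a' - e \<union> e = a'" unfolding T4_def by auto
      show "(\<lambda>\<tau>. \<tau> \<union> e) ` faces K 1 \<subseteq> T4"
      proof
        fix y assume "y \<in> (\<lambda>\<tau>. \<tau> \<union> e) ` faces K 1"
        then obtain \<tau> where t: "\<tau> \<in> K" "card \<tau> = 2" "y = \<tau> \<union> e" unfolding faces_def by auto
        then have "finite \<tau>" using card.infinite by fastforce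
        then show "y \<in> T4" using t Kc[of \<tau>] e(2) fine unfolding T4_def by (auto simp: card_Un_disjoint)
      qed
      show "(\<lambda>\<sigma>. \<sigma> - e) ` T4 \<subseteq> faces K 1"
      proof
        fix y assume "y \<in> (\<lambda>\<sigma>. \<sigma> - e) ` T4"
        then obtain \<sigma> where s: "\<sigma> \<in> M" "card \<sigma> = 4" "e \<subseteq> \<sigma>" "y = \<sigma> - e" unfolding T4_def by auto
        then have "card y = 2" using e(2) fine by (simp add: card_Diff_subset)
        moreover have "y \<noteq> {}" using \<open>card y = 2\<close> by auto
        moreover have "y \<union> e = \<sigma>" using s by auto
        ultimately show "y \<in> faces K 1" using s Kc[of y] unfolding faces_def by auto
      qed
    qed
    then show ?thesis by (rule bij_betw_same_card)
  qed
  have deg: "\<forall>u\<in>verts K. card {f\<in>faces K 1. u \<in> f} = 2" using K1 unfolding comb_1_sphere_def by simp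
  have finf: "finite (faces K 1)" using finK unfolding faces_def by auto
  have "(\<Sum>u\<in>verts K. card {f\<in>faces K 1. u \<in> f}) = 2 * card (faces K 1)"
  proof (rule sum_multicount[OF finvK finf], rule ballI)
    fix f assume f: "f \<in> faces K 1"
    then have "f \<subseteq> verts K" unfolding faces_def verts_def by auto
    then have "{i \<in> verts K. i \<in> f} = f" by auto
    then show "card {i \<in> verts K. i \<in> f} = 2" using f unfolding faces_def by auto
  qed
  moreover have "(\<Sum>u\<in>verts K. card {f\<in>faces K 1. u \<in> f}) = 2 * card (verts K)"
    using deg by simp
  ultimately have eq: "card (verts K) = card (faces K 1)" by simp
  have ge3: "card (verts K) \<ge> 3"
  proof -
    have "\<exists>\<sigma>\<in>K. card \<sigma> = 2" using K1 unfolding comb_1_sphere_def pure_dim_def complex_dim_def by (simp add: numeral_2_eq_2)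
    then obtain \<sigma> where "\<sigma> \<in> K" "card \<sigma> = 2" by auto
    then obtain x y where "\<sigma> = {x,y}" unfolding card_2_iff by blast
    then have u: "x \<in> verts K" using \<open>\<sigma> \<in> K\<close> unfolding verts_def by auto
    have "card {f\<in>faces K 1. x \<in> f} = 2" using deg u by auto
    then obtain f1 f2 where ff: "f1 \<noteq> f2" "{f\<in>faces K 1. x \<in> f} = {f1, f2}"
      unfolding card_2_iff by blast
    then have ff2: "f1 \<in> faces K 1" "f2 \<in> faces K 1" "x \<in> f1" "x \<in> f2" by auto
    then have "card f1 = 2" "card f2 = 2" unfolding faces_def by auto
    then obtain a where a: "f1 = {x, a}" "x \<noteq> a" using ff2(3) unfolding card_2_iff by auto
    obtain b where b: "f2 = {x, b}" "x \<noteq> b" using \<open>card f2 = 2\<close> ff2(4) unfolding card_2_iff by auto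
    have "a \<noteq> b" using a b ff by auto
    have "{x, a, b} \<subseteq> verts K" using ff2 a b unfolding faces_def verts_def by auto
    moreover have "card {x, a, b} = 3" using a b \<open>a \<noteq> b\<close> by auto
    ultimately show ?thesis using finvK by (metis card_mono)
  qed
  show ?thesis using eq c3 c4 ge3 unfolding T3_def T4_def by auto
qed


lemma sum_ind: "finite A \<Longrightarrow> (\<Sum>x\<in>A. if P x then 1 else 0 :: int) = int (card {x\<in>A. P x})"
  by (simp add: sum.inter_filter[symmetric])

lemma sum_split234:
  assumes "finite C" "\<forall>\<sigma>\<in>C. card \<sigma> = 2 \<or> card \<sigma> = 3 \<or> card \<sigma> = 4"
  shows "(\<Sum>\<sigma>\<in>C. (-1::int) ^ card \<sigma>) = int (card {\<sigma>\<in>C. card \<sigma> = 2}) - int (card {\<sigma>\<in>C. card \<sigma> = 3}) + int (card {\<sigma>\<in>C. card \<sigma> = 4})"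
proof -
  have "(\<Sum>\<sigma>\<in>C. (-1::int) ^ card \<sigma>) = (\<Sum>\<sigma>\<in>C. (if card \<sigma> = 2 then 1 else 0) - (if card \<sigma> = 3 then 1 else 0) + (if card \<sigma> = 4 then 1 else 0))"
    using assms(2) by (intro sum.cong) auto
  also have "\<dots> = int (card {\<sigma>\<in>C. card \<sigma> = 2}) - int (card {\<sigma>\<in>C. card \<sigma> = 3}) + int (card {\<sigma>\<in>C. card \<sigma> = 4})"
    by (simp add: sum.distrib sum_subtractf sum_ind[OF assms(1)])
  finally show ?thesis .
qed

lemma sum_split123:
  assumes "finite C" "\<forall>\<sigma>\<in>C. card \<sigma> = 1 \<or> card \<sigma> = 2 \<or> card \<sigma> = 3"
  shows "(\<Sum>\<sigma>\<in>C. - ((-1::int) ^ card \<sigma>)) = int (card {\<sigma>\<in>C. card \<sigma> = 1}) - int (card {\<sigma>\<in>C. card \<sigma> = 2}) + int (card {\<sigma>\<in>C. card \<sigma> = 3})"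
proof -
  have "(\<Sum>\<sigma>\<in>C. - ((-1::int) ^ card \<sigma>)) = (\<Sum>\<sigma>\<in>C. (if card \<sigma> = 1 then 1 else 0) - (if card \<sigma> = 2 then 1 else 0) + (if card \<sigma> = 3 then 1 else 0))"
    using assms(2) by (intro sum.cong) auto
  also have "\<dots> = int (card {\<sigma>\<in>C. card \<sigma> = 1}) - int (card {\<sigma>\<in>C. card \<sigma> = 2}) + int (card {\<sigma>\<in>C. card \<sigma> = 3})"
    by (simp add: sum.distrib sum_subtractf sum_ind[OF assms(1)])
  finally show ?thesis .
qed

lemma vertex_sum:
  assumes M: "comb_3_manifold M" and v: "v \<in> verts M"
  shows "(\<Sum>\<sigma>\<in>{\<sigma>\<in>M. v \<in> \<sigma> \<and> 2 \<le> card \<sigma>}. (-1::int) ^ card \<sigma>) = 2"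
proof -
  have sc: "simplicial_complex M" using M c3_sc by blast
  define L where "L = link M v"
  have L2: "comb_2_sphere L" using M v unfolding comb_3_manifold_def L_def by auto
  then have scL: "simplicial_complex L" unfolding comb_2_sphere_def by auto
  have finL: "finite L" using scL sc_fin by blast
  have eu: "euler_char L = 2" using L2 unfolding comb_2_sphere_def by auto
  have Lc: "\<tau> \<in> L \<longleftrightarrow> \<tau> \<noteq> {} \<and> v \<notin> \<tau> \<and> insert v \<tau> \<in> M" for \<tau>
    unfolding L_def link_def by auto
  have cardL: "\<forall>\<tau>\<in>L. card \<tau> = 1 \<or> card \<tau> = 2 \<or> card \<tau> = 3"
  proof
    fix \<tau> assume t: "\<tau> \<in> L"
    then have "finite \<tau>" "\<tau> \<noteq> {}" using scL sc_el by blast+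
    moreover have "card (insert v \<tau>) \<le> 4" using t Lc c3_card[OF M] by blast
    ultimately have "card \<tau> + 1 \<le> 4" "card \<tau> \<ge> 1" using t Lc
      by (auto simp: Suc_leI card_gt_0_iff)
    then show "card \<tau> = 1 \<or> card \<tau> = 2 \<or> card \<tau> = 3" by linarith
  qed
  have "(\<Sum>\<tau>\<in>L. - ((-1::int) ^ card \<tau>)) = 2"
    using sum_split123[OF finL cardL] eu unfolding euler_char_def faces_def by (simp add: numeral_2_eq_2 numeral_3_eq_3)
  moreover have "(\<Sum>\<tau>\<in>L. - ((-1::int) ^ card \<tau>)) = (\<Sum>\<tau>\<in>L. (-1::int) ^ card (insert v \<tau>))"
  proof (rule sum.cong)
    fix \<tau> assume "\<tau> \<in> L"
    then have "finite \<tau>" "v \<notin> \<tau>" using scL sc_el Lc by blast+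
    then show "- ((-1::int) ^ card \<tau>) = (-1::int) ^ card (insert v \<tau>)" by simp
  qed simp
  moreover have "(\<Sum>\<tau>\<in>L. (-1::int) ^ card (insert v \<tau>)) = (\<Sum>\<sigma>\<in>{\<sigma>\<in>M. v \<in> \<sigma> \<and> 2 \<le> card \<sigma>}. (-1::int) ^ card \<sigma>)"
  proof (rule sum.reindex_bij_betw[where h="insert v"])
    show "bij_betw (insert v) L {\<sigma>\<in>M. v \<in> \<sigma> \<and> 2 \<le> card \<sigma>}"
    proof (rule bij_betw_byWitness[where f'="\<lambda>\<sigma>. \<sigma> - {v}"])
      show "\<forall>a\<in>L. insert v a - {v} = a" using Lc by auto
      show "\<forall>a'\<in>{\<sigma> \<in> M. v \<in> \<sigma> \<and> 2 \<le> card \<sigma>}. insert v (a' - {v}) = a'" by auto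
      show "insert v ` L \<subseteq> {\<sigma> \<in> M. v \<in> \<sigma> \<and> 2 \<le> card \<sigma>}"
      proof
        fix y assume "y \<in> insert v ` L"
        then obtain \<tau> where t: "\<tau> \<in> L" "y = insert v \<tau>" by auto
        then have "finite \<tau>" "\<tau> \<noteq> {}" "v \<notin> \<tau>" using scL sc_el Lc by blast+
        then have "card \<tau> \<ge> 1" by (simp add: Suc_leI card_gt_0_iff)
        then show "y \<in> {\<sigma> \<in> M. v \<in> \<sigma> \<and> 2 \<le> card \<sigma>}" using t Lc \<open>finite \<tau>\<close> \<open>v \<notin> \<tau>\<close> by auto
      qed
      show "(\<lambda>\<sigma>. \<sigma> - {v}) ` {\<sigma> \<in> M. v \<in> \<sigma> \<and> 2 \<le> card \<sigma>} \<subseteq> L"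
      proof
        fix y assume "y \<in> (\<lambda>\<sigma>. \<sigma> - {v}) ` {\<sigma> \<in> M. v \<in> \<sigma> \<and> 2 \<le> card \<sigma>}"
        then obtain \<sigma> where s: "\<sigma> \<in> M" "v \<in> \<sigma>" "2 \<le> card \<sigma>" "y = \<sigma> - {v}" by auto
        then have "finite \<sigma>" using sc sc_el by blast
        then have "card y \<ge> 1" using s by (simp add: card_Diff_singleton)
        then have "y \<noteq> {}" by auto
        moreover have "insert v y = \<sigma>" using s by auto
        ultimately show "y \<in> L" using Lc s by auto
      qed
    qed
  qed
  ultimately show ?thesis by simp
qed


lemma main:
  assumes M: "comb_3_manifold M" and V: "V1 \<union> V2 = verts M" "V1 \<inter> V2 = {}"
    and sp: "complex_dim (span M V1) 1"
  shows "slice_euler M V1 V2 = 2 * int (card V1) - 2 * int (card {\<sigma>\<in>M. card \<sigma> = 2 \<and> \<sigma> \<subseteq> V1})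
    \<and> 3 * card {\<sigma>\<in>M. card \<sigma> = 2 \<and> \<sigma> \<subseteq> V1} \<le> card (slice_quads M V1 V2)"
proof -
  have sc: "simplicial_complex M" using M c3_sc by blast
  have finM: "finite M" using sc sc_fin by blast
  have elf: "\<And>\<sigma>. \<sigma> \<in> M \<Longrightarrow> finite \<sigma> \<and> \<sigma> \<noteq> {}" using sc sc_el by blast
  have c4: "\<And>\<sigma>. \<sigma> \<in> M \<Longrightarrow> card \<sigma> \<le> 4" using M c3_card by blast
  have subV: "\<And>\<sigma>. \<sigma> \<in> M \<Longrightarrow> \<sigma> \<subseteq> V1 \<union> V2" using V(1) unfolding verts_def by auto
  have finV1: "finite V1" using sc_verts_fin[OF sc] V(1) by (metis finite_Un)
  have cX: "\<And>\<sigma>. \<sigma> \<in> M \<Longrightarrow> card (\<sigma> \<inter> V1) \<le> 2"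
  proof -
    fix \<sigma> assume s: "\<sigma> \<in> M"
    show "card (\<sigma> \<inter> V1) \<le> 2"
    proof (cases "\<sigma> \<inter> V1 = {}")
      case False
      then have "\<sigma> \<inter> V1 \<in> M" using sc_sub[OF sc s] by blast
      then have "\<sigma> \<inter> V1 \<in> span M V1" unfolding span_def by auto
      then show ?thesis using sp unfolding complex_dim_def by auto
    qed simp
  qed
  define E where "E = {\<sigma>\<in>M. card \<sigma> = 2 \<and> \<sigma> \<subseteq> V1}"
  have finE: "finite E" using finM unfolding E_def by auto
  have eqX: "\<And>e \<sigma>. e \<in> E \<Longrightarrow> \<sigma> \<in> M \<Longrightarrow> e \<subseteq> \<sigma> \<Longrightarrow> \<sigma> \<inter> V1 = e"
  proof -
    fix e \<sigma> assume a: "e \<in> E" "\<sigma> \<in> M" "e \<subseteq> \<sigma>"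
    then have "e \<subseteq> \<sigma> \<inter> V1" "card e = 2" unfolding E_def by auto
    moreover have "finite (\<sigma> \<inter> V1)" using elf[OF a(2)] by auto
    ultimately show "\<sigma> \<inter> V1 = e" using cX[OF a(2)] card_seteq by metis
  qed
  define T where "T k e = {\<sigma>\<in>M. card \<sigma> = k \<and> e \<subseteq> \<sigma>}" for k :: nat and e
  have edge: "\<And>e. e \<in> E \<Longrightarrow> card (T 3 e) = card (T 4 e) \<and> card (T 4 e) \<ge> 3"
    using edge_link[OF M] unfolding E_def T_def by auto
  have finT: "\<And>k e. finite (T k e)" using finM unfolding T_def by auto
  have disj: "\<forall>e\<in>E. \<forall>e'\<in>E. e \<noteq> e' \<longrightarrow> T k e \<inter> T k e' = {}" for k
    using eqX unfolding T_def by blast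
  have quads: "3 * card E \<le> card (slice_quads M V1 V2)"
  proof -
    have "(\<Union>e\<in>E. T 4 e) \<subseteq> slice_quads M V1 V2"
    proof
      fix \<sigma> assume "\<sigma> \<in> (\<Union>e\<in>E. T 4 e)"
      then obtain e where e: "e \<in> E" "\<sigma> \<in> M" "card \<sigma> = 4" "e \<subseteq> \<sigma>" unfolding T_def by auto
      have X: "\<sigma> \<inter> V1 = e" using eqX e by blast
      have ce: "card e = 2" using e unfolding E_def by auto
      have "\<sigma> \<inter> V2 = \<sigma> - V1" using subV[OF e(2)] V(2) by blast
      moreover have "card (\<sigma> - V1) = card \<sigma> - card (\<sigma> \<inter> V1)"
        using elf[OF e(2)] by (intro card_Diff_subset_Int) simp
      then have "card (\<sigma> - V1) = 2" using X ce e(3) by simp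
      ultimately show "\<sigma> \<in> slice_quads M V1 V2" unfolding slice_quads_def faces_def
        using X ce e by auto
    qed
    moreover have "finite (slice_quads M V1 V2)" using finM unfolding slice_quads_def faces_def by auto
    ultimately have "card (\<Union>e\<in>E. T 4 e) \<le> card (slice_quads M V1 V2)" by (rule card_mono[rotated])
    moreover have "card (\<Union>e\<in>E. T 4 e) = (\<Sum>e\<in>E. card (T 4 e))"
      by (rule card_UN_disjoint[OF finE]) (use finT disj in auto)
    moreover have "card E * 3 \<le> (\<Sum>e\<in>E. card (T 4 e))"
      using sum_bounded_below[of E 3 "\<lambda>e. card (T 4 e)"] edge by auto
    ultimately show ?thesis by linarith
  qed
  define C where "C = {\<sigma>\<in>M. crosses V1 V2 \<sigma>}"
  have finC: "finite C" using finM unfolding C_def by auto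
  have crossiff: "\<And>\<sigma>. \<sigma> \<in> M \<Longrightarrow> crosses V1 V2 \<sigma> \<longleftrightarrow> \<sigma> \<inter> V1 \<noteq> {} \<and> \<not> \<sigma> \<subseteq> V1"
    unfolding crosses_def using subV V(2) by blast
  have cardC: "\<forall>\<sigma>\<in>C. card \<sigma> = 2 \<or> card \<sigma> = 3 \<or> card \<sigma> = 4"
  proof
    fix \<sigma> assume "\<sigma> \<in> C"
    then obtain x y where xy: "\<sigma> \<in> M" "x \<in> \<sigma> \<inter> V1" "y \<in> \<sigma> \<inter> V2" unfolding C_def crosses_def by auto
    then have "x \<noteq> y" using V(2) by auto
    then have "card {x, y} \<le> card \<sigma>" using xy elf[OF xy(1)] by (intro card_mono) auto
    then have "2 \<le> card \<sigma>" using \<open>x \<noteq> y\<close> by simp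
    then show "card \<sigma> = 2 \<or> card \<sigma> = 3 \<or> card \<sigma> = 4" using c4[OF xy(1)] by linarith
  qed
  have chi: "slice_euler M V1 V2 = (\<Sum>\<sigma>\<in>C. (-1::int) ^ card \<sigma>)"
  proof -
    have "{\<sigma>\<in>C. card \<sigma> = 2} = slice_verts M V1 V2" "{\<sigma>\<in>C. card \<sigma> = 3} = slice_edges M V1 V2"
      "{\<sigma>\<in>C. card \<sigma> = 4} = slice_facets M V1 V2"
      unfolding C_def slice_verts_def slice_edges_def slice_facets_def faces_def by auto
    then show ?thesis using sum_split234[OF finC cardC] unfolding slice_euler_def by simp
  qed
  define M2 where "M2 = {\<sigma>\<in>M. 2 \<le> card \<sigma>}"
  have finM2: "finite M2" using finM unfolding M2_def by auto
  have vsum: "(\<Sum>v\<in>V1. (\<Sum>\<sigma>\<in>{\<sigma>\<in>M. v \<in> \<sigma> \<and> 2 \<le> card \<sigma>}. (-1::int) ^ card \<sigma>)) = 2 * int (card V1)"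
  proof -
    have "\<forall>v\<in>V1. (\<Sum>\<sigma>\<in>{\<sigma>\<in>M. v \<in> \<sigma> \<and> 2 \<le> card \<sigma>}. (-1::int) ^ card \<sigma>) = 2"
      using vertex_sum[OF M] V(1) by auto
    then show ?thesis by simp
  qed
  have swap: "(\<Sum>v\<in>V1. (\<Sum>\<sigma>\<in>{\<sigma>\<in>M. v \<in> \<sigma> \<and> 2 \<le> card \<sigma>}. (-1::int) ^ card \<sigma>))
      = (\<Sum>\<sigma>\<in>M2. int (card (\<sigma> \<inter> V1)) * (-1::int) ^ card \<sigma>)"
  proof -
    have "(\<Sum>v\<in>V1. (\<Sum>\<sigma>\<in>{\<sigma>\<in>M. v \<in> \<sigma> \<and> 2 \<le> card \<sigma>}. (-1::int) ^ card \<sigma>))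
        = (\<Sum>v\<in>V1. (\<Sum>\<sigma>\<in>M2. if v \<in> \<sigma> then (-1::int) ^ card \<sigma> else 0))"
    proof (rule sum.cong)
      fix v assume "v \<in> V1"
      have "{\<sigma>\<in>M. v \<in> \<sigma> \<and> 2 \<le> card \<sigma>} = {\<sigma>\<in>M2. v \<in> \<sigma>}" unfolding M2_def by auto
      then show "(\<Sum>\<sigma>\<in>{\<sigma>\<in>M. v \<in> \<sigma> \<and> 2 \<le> card \<sigma>}. (-1::int) ^ card \<sigma>) = (\<Sum>\<sigma>\<in>M2. if v \<in> \<sigma> then (-1::int) ^ card \<sigma> else 0)"
        using sum.inter_filter[OF finM2] by simp
    qed simp
    also have "\<dots> = (\<Sum>\<sigma>\<in>M2. (\<Sum>v\<in>V1. if v \<in> \<sigma> then (-1::int) ^ card \<sigma> else 0))"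
      by (rule sum.swap)
    also have "\<dots> = (\<Sum>\<sigma>\<in>M2. int (card (\<sigma> \<inter> V1)) * (-1::int) ^ card \<sigma>)"
    proof (rule sum.cong)
      fix \<sigma> assume "\<sigma> \<in> M2"
      have "(\<Sum>v\<in>V1. if v \<in> \<sigma> then (-1::int) ^ card \<sigma> else 0) = (\<Sum>v\<in>{v\<in>V1. v \<in> \<sigma>}. (-1::int) ^ card \<sigma>)"
        by (simp add: sum.inter_filter[OF finV1, symmetric])
      also have "{v\<in>V1. v \<in> \<sigma>} = \<sigma> \<inter> V1" by auto
      finally show "(\<Sum>v\<in>V1. if v \<in> \<sigma> then (-1::int) ^ card \<sigma> else 0) = int (card (\<sigma> \<inter> V1)) * (-1::int) ^ card \<sigma>"
        by simp
    qed simp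
    finally show ?thesis .
  qed
  define C2 where "C2 = {\<sigma>\<in>M. card (\<sigma> \<inter> V1) = 2 \<and> \<not> \<sigma> \<subseteq> V1}"
  have finC2: "finite C2" using finM unfolding C2_def by auto
  have point: "\<And>\<sigma>. \<sigma> \<in> M2 \<Longrightarrow> int (card (\<sigma> \<inter> V1)) * (-1::int) ^ card \<sigma>
      = (if \<sigma> \<in> E then 2 else 0) + (if \<sigma> \<in> C then (-1::int) ^ card \<sigma> else 0) + (if \<sigma> \<in> C2 then (-1::int) ^ card \<sigma> else 0)"
  proof -
    fix \<sigma> assume s: "\<sigma> \<in> M2"
    then have sM: "\<sigma> \<in> M" and c2: "2 \<le> card \<sigma>" unfolding M2_def by auto
    have fs: "finite \<sigma>" "\<sigma> \<noteq> {}" using elf[OF sM] by auto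
    show "int (card (\<sigma> \<inter> V1)) * (-1::int) ^ card \<sigma>
      = (if \<sigma> \<in> E then 2 else 0) + (if \<sigma> \<in> C then (-1::int) ^ card \<sigma> else 0) + (if \<sigma> \<in> C2 then (-1::int) ^ card \<sigma> else 0)"
    proof (cases "\<sigma> \<inter> V1 = {}")
      case True
      then have "\<sigma> \<notin> E" "\<sigma> \<notin> C" "\<sigma> \<notin> C2" using fs crossiff[OF sM] unfolding E_def C_def C2_def by auto
      then show ?thesis using True by simp
    next
      case ne: False
      show ?thesis
      proof (cases "\<sigma> \<subseteq> V1")
        case True
        then have "\<sigma> \<inter> V1 = \<sigma>" by auto
        then have "card \<sigma> = 2" using cX[OF sM] c2 by simp
        then have "\<sigma> \<in> E" "\<sigma> \<notin> C" "\<sigma> \<notin> C2" using True sM crossiff[OF sM] unfolding E_def C_def C2_def by auto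
        then show ?thesis using \<open>\<sigma> \<inter> V1 = \<sigma>\<close> \<open>card \<sigma> = 2\<close> by simp
      next
        case False
        then have "\<sigma> \<notin> E" "\<sigma> \<in> C" using sM ne crossiff[OF sM] unfolding E_def C_def by auto
        moreover have "card (\<sigma> \<inter> V1) \<noteq> 0" using ne fs by auto
        ultimately show ?thesis using cX[OF sM] False sM unfolding C2_def
          by (cases "card (\<sigma> \<inter> V1) = 2") auto
      qed
    qed
  qed
  have subs: "E \<subseteq> M2" "C \<subseteq> M2" "C2 \<subseteq> M2"
  proof -
    show "E \<subseteq> M2" unfolding E_def M2_def by auto
    show "C \<subseteq> M2" using cardC unfolding C_def M2_def by fastforce
    show "C2 \<subseteq> M2"
    proof
      fix \<sigma> assume "\<sigma> \<in> C2"
      then have "\<sigma> \<in> M" "card (\<sigma> \<inter> V1) = 2" unfolding C2_def by auto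
      moreover then have "card (\<sigma> \<inter> V1) \<le> card \<sigma>" using elf by (intro card_mono) auto
      ultimately show "\<sigma> \<in> M2" unfolding M2_def by auto
    qed
  qed
  have rs: "\<And>A g. A \<subseteq> M2 \<Longrightarrow> (\<Sum>\<sigma>\<in>M2. if \<sigma> \<in> A then g \<sigma> else 0) = (\<Sum>\<sigma>\<in>A. g \<sigma> :: int)"
  proof -
    fix A :: "'a set set" and g :: "'a set \<Rightarrow> int" assume "A \<subseteq> M2"
    then have "M2 \<inter> A = A" by auto
    then show "(\<Sum>\<sigma>\<in>M2. if \<sigma> \<in> A then g \<sigma> else 0) = (\<Sum>\<sigma>\<in>A. g \<sigma>)"
      using sum.inter_restrict[OF finM2, of g A] by simp
  qed
  have tot: "(\<Sum>\<sigma>\<in>M2. int (card (\<sigma> \<inter> V1)) * (-1::int) ^ card \<sigma>)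
     = 2 * int (card E) + (\<Sum>\<sigma>\<in>C. (-1::int) ^ card \<sigma>) + (\<Sum>\<sigma>\<in>C2. (-1::int) ^ card \<sigma>)"
  proof -
    have "(\<Sum>\<sigma>\<in>M2. int (card (\<sigma> \<inter> V1)) * (-1::int) ^ card \<sigma>)
      = (\<Sum>\<sigma>\<in>M2. (if \<sigma> \<in> E then 2 else 0) + (if \<sigma> \<in> C then (-1::int) ^ card \<sigma> else 0) + (if \<sigma> \<in> C2 then (-1::int) ^ card \<sigma> else 0))"
      using point by (rule sum.cong[OF refl])
    also have "\<dots> = (\<Sum>\<sigma>\<in>M2. if \<sigma> \<in> E then 2 else 0) + (\<Sum>\<sigma>\<in>M2. if \<sigma> \<in> C then (-1::int) ^ card \<sigma> else 0) + (\<Sum>\<sigma>\<in>M2. if \<sigma> \<in> C2 then (-1::int) ^ card \<sigma> else 0)"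
      by (simp add: sum.distrib)
    also have "\<dots> = (\<Sum>\<sigma>\<in>E. 2) + (\<Sum>\<sigma>\<in>C. (-1::int) ^ card \<sigma>) + (\<Sum>\<sigma>\<in>C2. (-1::int) ^ card \<sigma>)"
      using rs[OF subs(1), of "\<lambda>_. 2"] rs[OF subs(2)] rs[OF subs(3)] by simp
    finally show ?thesis by simp
  qed
  have C2zero: "(\<Sum>\<sigma>\<in>C2. (-1::int) ^ card \<sigma>) = 0"
  proof -
    have un: "{\<sigma>\<in>C2. card \<sigma> = k} = (\<Union>e\<in>E. T k e)" if k3: "k \<ge> 3" for k
    proof
      show "{\<sigma>\<in>C2. card \<sigma> = k} \<subseteq> (\<Union>e\<in>E. T k e)"
      proof
        fix \<sigma> assume "\<sigma> \<in> {\<sigma>\<in>C2. card \<sigma> = k}"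
        then have s: "\<sigma> \<in> M" "card (\<sigma> \<inter> V1) = 2" "card \<sigma> = k" unfolding C2_def by auto
        then have "\<sigma> \<inter> V1 \<noteq> {}" by auto
        then have "\<sigma> \<inter> V1 \<in> M" using sc_sub[OF sc s(1)] by blast
        then have "\<sigma> \<inter> V1 \<in> E" using s unfolding E_def by auto
        moreover have "\<sigma> \<in> T k (\<sigma> \<inter> V1)" using s unfolding T_def by auto
        ultimately show "\<sigma> \<in> (\<Union>e\<in>E. T k e)" by blast
      qed
      show "(\<Union>e\<in>E. T k e) \<subseteq> {\<sigma>\<in>C2. card \<sigma> = k}"
      proof
        fix \<sigma> assume "\<sigma> \<in> (\<Union>e\<in>E. T k e)"
        then obtain e where e: "e \<in> E" "\<sigma> \<in> M" "card \<sigma> = k" "e \<subseteq> \<sigma>" unfolding T_def by auto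
        have X: "\<sigma> \<inter> V1 = e" using eqX e by blast
        have ce: "card e = 2" using e unfolding E_def by auto
        have "\<not> \<sigma> \<subseteq> V1" proof
          assume "\<sigma> \<subseteq> V1"
          then have "\<sigma> \<inter> V1 = \<sigma>" by auto
          then show False using X ce e(3) k3 by simp
        qed
        then show "\<sigma> \<in> {\<sigma>\<in>C2. card \<sigma> = k}" using X ce e unfolding C2_def by auto
      qed
    qed
    have ck: "card {\<sigma>\<in>C2. card \<sigma> = k} = (\<Sum>e\<in>E. card (T k e))" if "k \<ge> 3" for k
      unfolding un[OF that] by (rule card_UN_disjoint[OF finE]) (use finT disj in auto)
    have e2: "{\<sigma>\<in>C2. card \<sigma> = 2} = {}"
    proof -
      { fix \<sigma> assume s: "\<sigma> \<in> C2" "card \<sigma> = 2"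
        then have "\<sigma> \<inter> V1 = \<sigma>" using card_seteq[of \<sigma> "\<sigma> \<inter> V1"] elf unfolding C2_def by auto
        then have False using s unfolding C2_def by auto }
      then show ?thesis by auto
    qed
    have cc: "\<forall>\<sigma>\<in>C2. card \<sigma> = 2 \<or> card \<sigma> = 3 \<or> card \<sigma> = 4"
      using subs(3) c4 unfolding M2_def by fastforce
    have "(\<Sum>e\<in>E. card (T 3 e)) = (\<Sum>e\<in>E. card (T 4 e))" using edge by simp
    then have c34: "card {\<sigma>\<in>C2. card \<sigma> = 3} = card {\<sigma>\<in>C2. card \<sigma> = 4}"
      using ck[of 3] ck[of 4] by simp
    have "(\<Sum>\<sigma>\<in>C2. (-1::int) ^ card \<sigma>) = int (card {\<sigma>\<in>C2. card \<sigma> = 2}) - int (card {\<sigma>\<in>C2. card \<sigma> = 3}) + int (card {\<sigma>\<in>C2. card \<sigma> = 4})"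
      by (rule sum_split234[OF finC2 cc])
    then have "(\<Sum>\<sigma>\<in>C2. (-1::int) ^ card \<sigma>) = int (card ({}::'a set set)) - int (card {\<sigma>\<in>C2. card \<sigma> = 3}) + int (card {\<sigma>\<in>C2. card \<sigma> = 4})"
      unfolding e2 .
    then show ?thesis using c34 by simp
  qed
  have "slice_euler M V1 V2 = 2 * int (card V1) - 2 * int (card E)"
    using chi vsum swap tot C2zero by simp
  then show ?thesis using quads unfolding E_def by simp
qed


lemma crosses_sym: "crosses V1 V2 = crosses V2 V1"
  unfolding crosses_def by (auto simp: fun_eq_iff)

lemma slice_sym: "slice_euler M V1 V2 = slice_euler M V2 V1" "slice_quads M V1 V2 = slice_quads M V2 V1"
  unfolding slice_euler_def slice_verts_def slice_edges_def slice_facets_def slice_quads_def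
  by (auto simp: crosses_sym)

theorem theorem4p4:
  fixes M :: "'a set set" and V1 V2 W :: "'a set" and g :: int
  assumes "comb_3_manifold M"
    and "V1 \<union> V2 = verts M" and "V1 \<inter> V2 = {}" and "V1 \<noteq> {}" and "V2 \<noteq> {}"
    and "slice_connected M V1 V2"
    and "slice_genus M V1 V2 g"
    and "W = V1 \<or> W = V2"
    and "complex_dim (span M W) 1"
  shows "int (card (slice_quads M V1 V2)) \<ge> 3 * (int (card W) + g - 1)"
proof -
  have gen: "slice_euler M V1 V2 = 2 - 2 * g" using assms(7) unfolding slice_genus_def .
  obtain U where U: "W \<union> U = verts M" "W \<inter> U = {}" "slice_euler M W U = slice_euler M V1 V2"
    "slice_quads M W U = slice_quads M V1 V2"
    using assms(2,3,8) slice_sym by (metis Int_commute Un_commute)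
  have "slice_euler M W U = 2 * int (card W) - 2 * int (card {\<sigma>\<in>M. card \<sigma> = 2 \<and> \<sigma> \<subseteq> W})
    \<and> 3 * card {\<sigma>\<in>M. card \<sigma> = 2 \<and> \<sigma> \<subseteq> W} \<le> card (slice_quads M W U)"
    using main[OF assms(1) U(1,2) assms(9)] .
  then have a: "slice_euler M W U = 2 * int (card W) - 2 * int (card {\<sigma>\<in>M. card \<sigma> = 2 \<and> \<sigma> \<subseteq> W})"
    and b: "3 * int (card {\<sigma>\<in>M. card \<sigma> = 2 \<and> \<sigma> \<subseteq> W}) \<le> int (card (slice_quads M W U))"
    by linarith+
  show ?thesis using a[unfolded U(3)] b[unfolded U(4)] gen by (smt (verit))
qed

end
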